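(* Let $\varphi:\mathbb{R}^n\to\mathbb{R}$ be of class $\mathcal{C}^{1,1}$ and let $x^0\in\mathbb{R}^n$ be such that, with $\Omega:=\{x\in\mathbb{R}^n\mid \varphi(x)\le\varphi(x^0)\}$, for every $x\in\Omega$ the mapping $\partial^2\varphi(x)$ is positive-definite, i.e. $\langle z,u\rangle>0$ for all $u\neq0$ and all $z\in\partial^2\varphi(x)(u)$. Then: (i) any sequence $\{x^k\}$ generated by the Generalized Damped Newton Algorithm (with $\sigma\in(0,\tfrac12)$, $\beta\in(0,1)$) from $x^0$ is well-defined and $x^k\in\Omega$ for all $k$; (ii) all limiting points of $\{x^k\}$ are tilt-stable local minimizers of $\varphi$.
   Context: A function $\varphi:\mathbb{R}^n\to\mathbb{R}$ is of class $\mathcal{C}^{1,1}$ if it is continuously differentiable and $\nabla\varphi$ is Lipschitz continuous around every point. For $\Omega\subset\mathbb{R}^s$ and $\bar z\in\Omega$, the regular normal cone is $\widehat N_\Omega(\bar z):=\{v\mid \limsup_{z\to\bar z,\,z\in\Omega}\langle v,z-\bar z\rangle/\|z-\bar z\|\le 0\}$ and the limiting normal cone $N_\Omega(\bar z)$ is the set of all $v$ for which there exist $z_k\to\bar z$ with $z_k\in\Omega$ and $v_k\to v$ with $v_k\in\widehat N_\Omega(z_k)$. For $F:\mathbb{R}^n\rightrightarrows\mathbb{R}^m$ and $(\bar x,\bar y)\in\operatorname{gph}F$, $D^*F(\bar x,\bar y)(v):=\{u\mid (u,-v)\in N_{\operatorname{gph}F}(\bar x,\bar y)\}$. For $\varphi$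 of class $\mathcal{C}^{1,1}$, $\partial^2\varphi(x)(u):=D^*(\nabla\varphi)(x,\nabla\varphi(x))(u)$. A point $\bar x$ is a tilt-stable local minimizer of $\varphi$ if there is $\gamma>0$ such that $M_\gamma(v):=\operatorname{argmin}\{\varphi(x)-\langle v,x\rangle\mid x\in\mathbb{B}_\gamma(\bar x)\}$ is single-valued and Lipschitz continuous on a neighborhood of $0$ with $M_\gamma(0)=\{\bar x\}$. Generalized Damped Newton Algorithm: given $\sigma\in(0,\tfrac12)$, $\beta\in(0,1)$ and $x^0$, set $k=0$. If $\nabla\varphi(x^k)=0$ stop. Otherwise choose $d^k$ with $-\nabla\varphi(x^k)\in\partial^2\varphi(x^k)(d^k)$; set $\tau_k=1$ and, while $\varphi(x^k+\tau_kd^k)>\varphi(x^k)+\sigma\tau_k\langle\nabla\varphi(x^k),d^k\rangle$, replace $\tau_k$ by $\beta\tau_k$; set $x^{k+1}:=x^k+\tau_kd^k$, increase $k$ by 1 and repeat. *)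

theory Defs
  imports "HOL-Analysis.Analysis"
begin

definition loc_lipschitz :: "('a::real_normed_vector \<Rightarrow> 'b::real_normed_vector) \<Rightarrow> bool" where
  "loc_lipschitz g \<longleftrightarrow>
     (\<forall>x. \<exists>r>0. \<exists>L. \<forall>y\<in>ball x r. \<forall>z\<in>ball x r. norm (g y - g z) \<le> L * norm (y - z))"

definition is_C11 :: "('a::euclidean_space \<Rightarrow> real) \<Rightarrow> ('a \<Rightarrow> 'a) \<Rightarrow> bool" where
  "is_C11 phi g \<longleftrightarrow>
     (\<forall>x. (phi has_derivative (\<lambda>h. g x \<bullet> h)) (at x)) \<and> continuous_on UNIV g \<and> loc_lipschitz g"

text \<open>Regular normal cone: limsup_{z -> zb, z in Omega} <v, z - zb>/|z - zb| <= 0.\<close>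
definition reg_normal :: "'a::real_inner set \<Rightarrow> 'a \<Rightarrow> 'a set" where
  "reg_normal \<Omega> zb = {v. \<forall>e>0. \<exists>\<delta>>0. \<forall>z\<in>\<Omega>. z \<noteq> zb \<and> norm (z - zb) < \<delta> \<longrightarrow>
        v \<bullet> (z - zb) / norm (z - zb) \<le> e}"

definition lim_normal :: "'a::real_inner set \<Rightarrow> 'a \<Rightarrow> 'a set" where
  "lim_normal \<Omega> zb = {v. \<exists>z w. (\<forall>k. z k \<in> \<Omega> \<and> w k \<in> reg_normal \<Omega> (z k)) \<and>
        z \<longlonglongrightarrow> zb \<and> w \<longlonglongrightarrow> v}"

definition gph :: "('a \<Rightarrow> 'b set) \<Rightarrow> ('a \<times> 'b) set" where
  "gph F = {(x, y). y \<in> F x}"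

definition coderiv :: "('a::real_inner \<Rightarrow> 'b::real_inner set) \<Rightarrow> 'a \<Rightarrow> 'b \<Rightarrow> 'b \<Rightarrow> 'a set" where
  "coderiv F x y v = {u. (u, - v) \<in> lim_normal (gph F) (x, y)}"

definition hess2 :: "('a::euclidean_space \<Rightarrow> 'a) \<Rightarrow> 'a \<Rightarrow> 'a \<Rightarrow> 'a set" where
  "hess2 g x u = coderiv (\<lambda>y. {g y}) x (g x) u"

definition M_tilt :: "('a::euclidean_space \<Rightarrow> real) \<Rightarrow> 'a \<Rightarrow> real \<Rightarrow> 'a \<Rightarrow> 'a set" where
  "M_tilt phi xb \<gamma> v = {x \<in> cball xb \<gamma>. \<forall>y\<in>cball xb \<gamma>. phi x - v \<bullet> x \<le> phi y - v \<bullet> y}"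

definition tilt_stable :: "('a::euclidean_space \<Rightarrow> real) \<Rightarrow> 'a \<Rightarrow> bool" where
  "tilt_stable phi xb \<longleftrightarrow>
     (\<exists>\<gamma>>0. \<exists>\<epsilon>>0. \<exists>m L.
        (\<forall>v\<in>ball 0 \<epsilon>. M_tilt phi xb \<gamma> v = {m v}) \<and>
        (\<forall>v\<in>ball 0 \<epsilon>. \<forall>w\<in>ball 0 \<epsilon>. norm (m v - m w) \<le> L * norm (v - w)) \<and>
        M_tilt phi xb \<gamma> 0 = {xb})"

definition armijo :: "('a::euclidean_space \<Rightarrow> real) \<Rightarrow> ('a \<Rightarrow> 'a) \<Rightarrow> real \<Rightarrow> real \<Rightarrow> 'a \<Rightarrow> 'a \<Rightarrow> nat \<Rightarrow> bool" where
  "armijo phi g \<sigma> \<beta> x d j \<longleftrightarrow>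
     phi (x + (\<beta> ^ j) *\<^sub>R d) \<le> phi x + \<sigma> * (\<beta> ^ j) * (g x \<bullet> d)"

text \<open>If the gradient
  vanishes the algorithm stops; we then extend the sequence constantly.\<close>
definition gdn_step :: "('a::euclidean_space \<Rightarrow> real) \<Rightarrow> ('a \<Rightarrow> 'a) \<Rightarrow> real \<Rightarrow> real \<Rightarrow> 'a \<Rightarrow> 'a \<Rightarrow> bool" where
  "gdn_step phi g \<sigma> \<beta> x x' \<longleftrightarrow>
     (g x = 0 \<and> x' = x) \<or>
     (g x \<noteq> 0 \<and> (\<exists>d. - g x \<in> hess2 g x d \<and> (\<exists>j. armijo phi g \<sigma> \<beta> x d j) \<and>
          x' = x + (\<beta> ^ (LEAST j. armijo phi g \<sigma> \<beta> x d j)) *\<^sub>R d))"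

definition gdn_run :: "('a::euclidean_space \<Rightarrow> real) \<Rightarrow> ('a \<Rightarrow> 'a) \<Rightarrow> real \<Rightarrow> real \<Rightarrow> 'a \<Rightarrow> (nat \<Rightarrow> 'a) \<Rightarrow> nat \<Rightarrow> bool" where
  "gdn_run phi g \<sigma> \<beta> x0 x N \<longleftrightarrow> x 0 = x0 \<and> (\<forall>k<N. gdn_step phi g \<sigma> \<beta> (x k) (x (Suc k)))"

end

theory Submission
  imports Defs
begin


lemma gph_single_iff: "(a, b) \<in> gph (\<lambda>y. {g y}) \<longleftrightarrow> b = g a"
  by (simp add: gph_def)

lemma reg_normal_gphI:
  fixes g :: "'a::euclidean_space \<Rightarrow> 'a"
  assumes dpos: "\<delta> > 0"
    and ineq: "\<And>u. u \<in> ball y \<delta> \<Longrightarrow> w \<bullet> (u - y) - a \<bullet> (g u - g y) \<le> C * (norm (u - y))\<^sup>2"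
  shows "(w, -a) \<in> reg_normal (gph (\<lambda>y. {g y})) (y, g y)"
  unfolding reg_normal_def
proof (intro CollectI allI impI)
  fix e :: real assume e: "e > 0"
  define C' where "C' = max C 1"
  have C'pos: "C' > 0" "C \<le> C'" unfolding C'_def by auto
  define d where "d = min \<delta> (e / C')"
  have dpos': "d > 0" using dpos e C'pos by (simp add: d_def)
  show "\<exists>\<delta>>0. \<forall>z\<in>gph (\<lambda>y. {g y}). z \<noteq> (y, g y) \<and> norm (z - (y, g y)) < \<delta> \<longrightarrow>
          (w, - a) \<bullet> (z - (y, g y)) / norm (z - (y, g y)) \<le> e"
  proof (intro exI[of _ d] conjI dpos' ballI impI)
    fix z assume z: "z \<in> gph (\<lambda>y. {g y})" and zz: "z \<noteq> (y, g y) \<and> norm (z - (y, g y)) < d"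
    obtain u where zu: "z = (u, g u)" using z by (cases z) (auto simp: gph_def)
    define N where "N = norm (z - (y, g y))"
    have Npos: "N > 0" using zz by (simp add: N_def)
    have Nlt: "N < d" using zz by (simp add: N_def)
    have nu: "norm (u - y) \<le> N" unfolding N_def zu using norm_fst_le[of "u - y" "g u - g y"] by simp
    have "u \<in> ball y \<delta>" using nu Nlt by (simp add: dist_norm norm_minus_commute d_def)
    then have i1: "w \<bullet> (u - y) - a \<bullet> (g u - g y) \<le> C * (norm (u - y))\<^sup>2" by (rule ineq)
    have "(norm (u - y))\<^sup>2 \<le> N\<^sup>2" using nu by (simp add: power_mono)
    then have "C * (norm (u - y))\<^sup>2 \<le> C' * N\<^sup>2"
      using C'pos by (meson dual_order.trans mult_left_mono mult_right_mono zero_le_power2 less_imp_le norm_ge_zero)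
    have "(w, - a) \<bullet> (z - (y, g y)) = w \<bullet> (u - y) - a \<bullet> (g u - g y)" by (simp add: zu)
    also have "\<dots> \<le> C' * N\<^sup>2" using i1 \<open>C * (norm (u - y))\<^sup>2 \<le> C' * N\<^sup>2\<close> by linarith
    finally have "(w, - a) \<bullet> (z - (y, g y)) / N \<le> C' * N\<^sup>2 / N" using Npos by (simp add: divide_right_mono)
    also have "\<dots> = C' * N" using Npos by (simp add: power2_eq_square)
    also have "\<dots> \<le> C' * (e / C')" using Nlt C'pos unfolding d_def by (intro mult_left_mono) auto
    also have "\<dots> = e" using C'pos by simp
    finally show "(w, - a) \<bullet> (z - (y, g y)) / norm (z - (y, g y)) \<le> e" by (simp add: N_def)
  qed
qed



lemma reg_normal_gph_bound:
  fixes g :: "'a::euclidean_space \<Rightarrow> 'a"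
  assumes rn: "(w, -a) \<in> reg_normal (gph (\<lambda>y. {g y})) (y, g y)" and rho: "\<rho> > 0" and L: "L \<ge> 0"
    and lip: "\<forall>u\<in>ball y \<rho>. norm (g u - g y) \<le> L * norm (u - y)"
  shows "norm w \<le> L * norm a"
proof (cases "w = 0")
  case True then show ?thesis using L by simp
next
  case False
  define h where "h = w /\<^sub>R norm w"
  have nh: "norm h = 1" using False by (simp add: h_def)
  have wh: "w \<bullet> h = norm w" using False by (simp add: h_def inner_commute power2_norm_eq_inner[symmetric] power2_eq_square)
  have "norm w \<le> L * norm a + e" if e: "e > 0" for e
  proof -
    define e' where "e' = e / (1 + L)"
    have e': "e' > 0" using e L by (simp add: e'_def)
    obtain \<delta> where d: "\<delta> > 0" and dP: "\<forall>z\<in>gph (\<lambda>y. {g y}). z \<noteq> (y, g y) \<and> norm (z - (y, g y)) < \<delta> \<longrightarrow>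
          (w, -a) \<bullet> (z - (y, g y)) / norm (z - (y, g y)) \<le> e'"
      using rn e' unfolding reg_normal_def by blast
    define t where "t = min \<delta> \<rho> / (2 * (1 + L))"
    have tpos: "t > 0" using d rho L by (simp add: t_def)
    have tt: "t * (1 + L) = min \<delta> \<rho> / 2" using L unfolding t_def by (simp add: field_simps)
    have "t \<le> t * (1 + L)" using tpos L by simp
    then have t1: "t * (1 + L) < \<delta>" "t < \<rho>" using d rho tt by auto
    define u where "u = y + t *\<^sub>R h"
    have uy: "u - y = t *\<^sub>R h" by (simp add: u_def)
    have nuy: "norm (u - y) = t" using tpos nh by (simp add: uy)
    have "u \<in> ball y \<rho>" using nuy t1 by (simp add: dist_norm norm_minus_commute)
    with lip have lg: "norm (g u - g y) \<le> L * t" using nuy by auto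
    define N where "N = norm ((u, g u) - (y, g y))"
    have Neq: "N = norm (u - y, g u - g y)" by (simp add: N_def)
    have "N \<le> t + L * t" using norm_Pair_le[of "u - y" "g u - g y"] nuy lg Neq by linarith
    then have Nle: "N \<le> t * (1 + L)" by (simp add: algebra_simps)
    have Npos: "N > 0" using norm_fst_le[of "u - y" "g u - g y"] nuy tpos Neq by linarith
    have "(u, g u) \<in> gph (\<lambda>y. {g y})" by (simp add: gph_def)
    moreover have "(u, g u) \<noteq> (y, g y) \<and> norm ((u, g u) - (y, g y)) < \<delta>"
    proof
      show "(u, g u) \<noteq> (y, g y)" using nuy tpos by auto
      show "norm ((u, g u) - (y, g y)) < \<delta>" using Nle t1 unfolding N_def by linarith
    qed
    ultimately have "(w, -a) \<bullet> ((u, g u) - (y, g y)) / N \<le> e'" using dP unfolding N_def by blast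
    then have "(w, -a) \<bullet> ((u, g u) - (y, g y)) \<le> e' * N" using Npos by (simp add: divide_le_eq)
    also have "\<dots> \<le> e' * (t * (1 + L))" using Nle e' by (simp add: mult_left_mono)
    also have "\<dots> = e * t" using L by (simp add: e'_def)
    finally have i1: "w \<bullet> (u - y) - a \<bullet> (g u - g y) \<le> e * t" by simp
    have "w \<bullet> (u - y) = t * norm w" using wh by (simp add: uy)
    moreover have "a \<bullet> (g u - g y) \<le> norm a * (L * t)"
    proof -
      have "a \<bullet> (g u - g y) \<le> norm a * norm (g u - g y)" using Cauchy_Schwarz_ineq2[of a "g u - g y"] by linarith
      also have "\<dots> \<le> norm a * (L * t)" using lg by (simp add: mult_left_mono)
      finally show ?thesis .
    qed
    ultimately have "t * norm w \<le> t * (L * norm a + e)" using i1 by (simp add: algebra_simps)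
    then show ?thesis using tpos by simp
  qed
  then show ?thesis by (rule field_le_epsilon)
qed



lemma reg_normal_scale:
  assumes "v \<in> reg_normal S z" "c > 0"
  shows "c *\<^sub>R v \<in> reg_normal S z"
  unfolding reg_normal_def
proof (intro CollectI allI impI)
  fix e :: real assume e: "e > 0"
  then have "e / c > 0" using assms(2) by simp
  then obtain \<delta> where d: "\<delta> > 0" "\<forall>y\<in>S. y \<noteq> z \<and> norm (y - z) < \<delta> \<longrightarrow> v \<bullet> (y - z) / norm (y - z) \<le> e / c"
    using assms(1) unfolding reg_normal_def by blast
  show "\<exists>\<delta>>0. \<forall>y\<in>S. y \<noteq> z \<and> norm (y - z) < \<delta> \<longrightarrow> c *\<^sub>R v \<bullet> (y - z) / norm (y - z) \<le> e"
  proof (intro exI[of _ \<delta>] conjI d(1) ballI impI)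
    fix y assume "y \<in> S" "y \<noteq> z \<and> norm (y - z) < \<delta>"
    then have "v \<bullet> (y - z) / norm (y - z) \<le> e / c" using d by blast
    from mult_left_mono[OF this less_imp_le[OF assms(2)]]
    have "c * (v \<bullet> (y - z) / norm (y - z)) \<le> e" using assms(2) by simp
    then show "c *\<^sub>R v \<bullet> (y - z) / norm (y - z) \<le> e" using assms(2) by simp
  qed
qed

lemma lip_ball_uniform:
  fixes g :: "'a::euclidean_space \<Rightarrow> 'a"
  assumes "loc_lipschitz g"
  obtains r L where "r > 0" "L \<ge> 0" "\<forall>y\<in>ball x r. \<forall>z\<in>ball x r. norm (g y - g z) \<le> L * norm (y - z)"
proof -
  obtain r L0 where r: "r > 0" "\<forall>y\<in>ball x r. \<forall>z\<in>ball x r. norm (g y - g z) \<le> L0 * norm (y - z)"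
    using assms unfolding loc_lipschitz_def by blast
  have "\<forall>y\<in>ball x r. \<forall>z\<in>ball x r. norm (g y - g z) \<le> max L0 0 * norm (y - z)"
    using r(2) by (meson dual_order.trans max.cobounded1 mult_right_mono norm_ge_zero)
  then show ?thesis using that r(1) by (meson max.cobounded2)
qed

lemma reg_normal_bound_near:
  fixes g :: "'a::euclidean_space \<Rightarrow> 'a"
  assumes r: "r > 0" "L \<ge> 0" "\<forall>y\<in>ball x r. \<forall>z\<in>ball x r. norm (g y - g z) \<le> L * norm (y - z)"
    and y: "y \<in> ball x (r/2)"
    and rn: "(w, -a) \<in> reg_normal (gph (\<lambda>y. {g y})) (y, g y)"
  shows "norm w \<le> L * norm a"
proof (rule reg_normal_gph_bound[OF rn _ r(2)])
  show "r/2 > 0" using r by simp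
  show "\<forall>u\<in>ball y (r / 2). norm (g u - g y) \<le> L * norm (u - y)"
  proof
    fix u assume "u \<in> ball y (r/2)"
    then have "dist y u < r/2" by simp
    moreover have "dist x y < r/2" using y by simp
    ultimately have "dist x u < r" using dist_triangle[of x u y] by linarith
    then have "u \<in> ball x r" "y \<in> ball x r" using \<open>dist x y < r/2\<close> r(1) by auto
    then show "norm (g u - g y) \<le> L * norm (u - y)" using r(3) by blast
  qed
qed



lemma uniform_pos:
  fixes g :: "'a::euclidean_space \<Rightarrow> 'a"
  assumes cont: "continuous_on UNIV g" and lip: "loc_lipschitz g"
    and pdx: "\<forall>u z. u \<noteq> 0 \<and> z \<in> hess2 g x u \<longrightarrow> z \<bullet> u > 0"
  shows "\<exists>r>0. \<exists>\<kappa>>0. \<forall>y\<in>ball x r. \<forall>w a. (w, -a) \<in> reg_normal (gph (\<lambda>y. {g y})) (y, g y) \<longrightarrow> \<kappa> * (norm a)\<^sup>2 \<le> w \<bullet> a"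
proof (rule ccontr)
  obtain r0 L where r0: "r0 > 0" "L \<ge> 0" "\<forall>y\<in>ball x r0. \<forall>z\<in>ball x r0. norm (g y - g z) \<le> L * norm (y - z)"
    using lip_ball_uniform[OF lip] by blast
  assume neg: "\<not> ?thesis"
  have "\<forall>n. \<exists>y w a. y \<in> ball x (min (r0/2) (inverse (real (Suc n)))) \<and> (w, -a) \<in> reg_normal (gph (\<lambda>y. {g y})) (y, g y)
          \<and> norm a = 1 \<and> w \<bullet> a < inverse (real (Suc n))"
  proof
    fix n
    define e where "e = inverse (real (Suc n))"
    have epos: "e > 0" by (simp add: e_def)
    have "min (r0/2) e > 0" using r0(1) epos by simp
    then have "\<not> (\<forall>y\<in>ball x (min (r0/2) e). \<forall>w a. (w, -a) \<in> reg_normal (gph (\<lambda>y. {g y})) (y, g y) \<longrightarrow> e * (norm a)\<^sup>2 \<le> w \<bullet> a)"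
      using neg epos by blast
    then obtain y w a where y: "y \<in> ball x (min (r0/2) e)" and rn: "(w, -a) \<in> reg_normal (gph (\<lambda>y. {g y})) (y, g y)"
      and lt: "w \<bullet> a < e * (norm a)\<^sup>2" by force
    have an: "a \<noteq> 0" using lt by auto
    define c where "c = 1 / norm a"
    have cpos: "c > 0" using an by (simp add: c_def)
    have "c *\<^sub>R (w, -a) \<in> reg_normal (gph (\<lambda>y. {g y})) (y, g y)" by (rule reg_normal_scale[OF rn cpos])
    then have rn2: "(c *\<^sub>R w, - (c *\<^sub>R a)) \<in> reg_normal (gph (\<lambda>y. {g y})) (y, g y)" by simp
    have na: "norm (c *\<^sub>R a) = 1" using an by (simp add: c_def)
    have "(c *\<^sub>R w) \<bullet> (c *\<^sub>R a) = c\<^sup>2 * (w \<bullet> a)" by (simp add: power2_eq_square)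
    also have "\<dots> < c\<^sup>2 * (e * (norm a)\<^sup>2)" using lt cpos by simp
    also have "\<dots> = e" using an by (simp add: c_def power2_eq_square)
    finally show "\<exists>y w a. y \<in> ball x (min (r0/2) (inverse (real (Suc n)))) \<and> (w, -a) \<in> reg_normal (gph (\<lambda>y. {g y})) (y, g y)
          \<and> norm a = 1 \<and> w \<bullet> a < inverse (real (Suc n))"
      using y rn2 na unfolding e_def by blast
  qed
  then obtain Y W A where YWA: "\<And>n. Y n \<in> ball x (min (r0/2) (inverse (real (Suc n))))"
    "\<And>n. (W n, -A n) \<in> reg_normal (gph (\<lambda>y. {g y})) (Y n, g (Y n))"
    "\<And>n. norm (A n) = 1" "\<And>n. W n \<bullet> A n < inverse (real (Suc n))"
    by metis
  have Wb: "norm (W n) \<le> L" for n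
  proof -
    have "Y n \<in> ball x (r0/2)" using YWA(1)[of n] by simp
    from reg_normal_bound_near[OF r0 this YWA(2)] show ?thesis using YWA(3) by simp
  qed
  have bnd: "\<forall>n. (W n, A n) \<in> cball 0 (L + 1)"
  proof
    fix n
    have "norm (W n, A n) \<le> norm (W n) + norm (A n)" by (rule norm_Pair_le)
    then show "(W n, A n) \<in> cball 0 (L + 1)" using Wb[of n] YWA(3)[of n] by simp
  qed
  obtain l s where ls: "l \<in> cball 0 (L + 1)" "strict_mono s" "((\<lambda>n. (W n, A n)) \<circ> s) \<longlonglongrightarrow> l"
    using seq_compactE[OF compact_imp_seq_compact[OF compact_cball] bnd] by blast
  obtain w0 a0 where l: "l = (w0, a0)" by (cases l)
  have Wl: "(\<lambda>n. W (s n)) \<longlonglongrightarrow> w0" using tendsto_fst[OF ls(3)] by (simp add: l o_def)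
  have Al: "(\<lambda>n. A (s n)) \<longlonglongrightarrow> a0" using tendsto_snd[OF ls(3)] by (simp add: l o_def)
  have Yl: "Y \<longlonglongrightarrow> x"
  proof -
    have "(\<lambda>n. dist (Y n) x) \<longlonglongrightarrow> 0"
    proof (rule tendsto_sandwich[of "\<lambda>n. 0" _ _ "\<lambda>n. inverse (real (Suc n))"])
      show "\<forall>\<^sub>F n in sequentially. 0 \<le> dist (Y n) x" by simp
      show "\<forall>\<^sub>F n in sequentially. dist (Y n) x \<le> inverse (real (Suc n))"
        using YWA(1) by (simp add: dist_commute less_imp_le)
    qed (rule tendsto_const, rule LIMSEQ_inverse_real_of_nat)
    then show ?thesis using tendsto_dist_iff by blast
  qed
  have Ysl: "(\<lambda>n. Y (s n)) \<longlonglongrightarrow> x" using LIMSEQ_subseq_LIMSEQ[OF Yl ls(2)] by (simp add: o_def)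
  have isc: "isCont g x" using cont by (simp add: continuous_on_eq_continuous_at)
  have gYsl: "(\<lambda>n. g (Y (s n))) \<longlonglongrightarrow> g x" by (rule isCont_tendsto_compose[OF isc Ysl])
  have "(w0, -a0) \<in> lim_normal (gph (\<lambda>y. {g y})) (x, g x)"
    unfolding lim_normal_def
  proof (intro CollectI exI conjI allI)
    fix k
    show "(Y (s k), g (Y (s k))) \<in> gph (\<lambda>y. {g y})" by (simp add: gph_def)
    show "(W (s k), - A (s k)) \<in> reg_normal (gph (\<lambda>y. {g y})) (Y (s k), g (Y (s k)))" by (rule YWA(2))
  next
    show "(\<lambda>k. (Y (s k), g (Y (s k)))) \<longlonglongrightarrow> (x, g x)" by (intro tendsto_Pair Ysl gYsl)
    show "(\<lambda>k. (W (s k), - A (s k))) \<longlonglongrightarrow> (w0, - a0)" by (intro tendsto_Pair Wl tendsto_minus Al)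
  qed
  then have hw: "w0 \<in> hess2 g x a0" by (simp add: hess2_def coderiv_def)
  have "(\<lambda>n. norm (A (s n))) \<longlonglongrightarrow> norm a0" by (intro tendsto_norm Al)
  then have "norm a0 = 1" using YWA(3) by (simp add: LIMSEQ_const_iff)
  then have a0n: "a0 \<noteq> 0" by auto
  have "(\<lambda>n. inverse (real (Suc (s n)))) \<longlonglongrightarrow> 0"
    using LIMSEQ_subseq_LIMSEQ[OF LIMSEQ_inverse_real_of_nat ls(2)] by (simp add: o_def)
  moreover have "(\<lambda>n. W (s n) \<bullet> A (s n)) \<longlonglongrightarrow> w0 \<bullet> a0" by (intro tendsto_inner Wl Al)
  ultimately have "w0 \<bullet> a0 \<le> 0"
    using YWA(4) by (intro LIMSEQ_le[of "\<lambda>n. W (s n) \<bullet> A (s n)" _ "\<lambda>n. inverse (real (Suc (s n)))"]) (auto intro: less_imp_le)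
  moreover have "w0 \<bullet> a0 > 0" using pdx hw a0n by blast
  ultimately show False by simp
qed

lemma lim_normal_gph_inherit:
  fixes g :: "'a::euclidean_space \<Rightarrow> 'a"
  assumes P: "\<forall>y'\<in>ball x r. \<forall>w a. (w, -a) \<in> reg_normal (gph (\<lambda>y. {g y})) (y', g y') \<longrightarrow> \<kappa> * (norm a)\<^sup>2 \<le> w \<bullet> a \<and> norm w \<le> L * norm a"
    and y: "y \<in> ball x r"
    and ln: "(w, -a) \<in> lim_normal (gph (\<lambda>y. {g y})) (y, g y)"
  shows "\<kappa> * (norm a)\<^sup>2 \<le> w \<bullet> a \<and> norm w \<le> L * norm a"
proof -
  obtain z v where zv: "\<forall>k. z k \<in> gph (\<lambda>y. {g y}) \<and> v k \<in> reg_normal (gph (\<lambda>y. {g y})) (z k)"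
    "z \<longlonglongrightarrow> (y, g y)" "v \<longlonglongrightarrow> (w, -a)"
    using ln unfolding lim_normal_def by blast
  define Y where "Y k = fst (z k)" for k
  define W where "W k = fst (v k)" for k
  define A where "A k = - snd (v k)" for k
  have zk: "z k = (Y k, g (Y k))" for k
  proof -
    have "z k \<in> gph (\<lambda>y. {g y})" using zv(1) by blast
    then show ?thesis unfolding Y_def by (cases "z k") (simp add: gph_def)
  qed
  have vk: "v k = (W k, - A k)" for k unfolding W_def A_def by simp
  have Yl: "Y \<longlonglongrightarrow> y" unfolding Y_def using tendsto_fst[OF zv(2)] by simp
  have Wl: "W \<longlonglongrightarrow> w" unfolding W_def using tendsto_fst[OF zv(3)] by simp
  have Al: "A \<longlonglongrightarrow> a" unfolding A_def using tendsto_minus[OF tendsto_snd[OF zv(3)]] by simp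
  have ev: "eventually (\<lambda>k. Y k \<in> ball x r) sequentially"
    using topological_tendstoD[OF Yl open_ball y] .
  then obtain N where N: "\<forall>k\<ge>N. Y k \<in> ball x r" by (auto simp: eventually_sequentially)
  have ineqs: "\<kappa> * (norm (A k))\<^sup>2 \<le> W k \<bullet> A k \<and> norm (W k) \<le> L * norm (A k)" if "k \<ge> N" for k
  proof -
    have "Y k \<in> ball x r" using N that by blast
    moreover have "v k \<in> reg_normal (gph (\<lambda>y. {g y})) (z k)" using zv(1) by blast
    then have "(W k, - A k) \<in> reg_normal (gph (\<lambda>y. {g y})) (Y k, g (Y k))" by (simp only: zk vk)
    ultimately show ?thesis using P by blast
  qed
  have "\<kappa> * (norm a)\<^sup>2 \<le> w \<bullet> a"
    by (rule LIMSEQ_le[of "\<lambda>k. \<kappa> * (norm (A k))\<^sup>2" _ "\<lambda>k. W k \<bullet> A k"])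
       (use ineqs in \<open>auto intro!: tendsto_intros Wl Al\<close>)
  moreover have "norm w \<le> L * norm a"
    by (rule LIMSEQ_le[of "\<lambda>k. norm (W k)" _ "\<lambda>k. L * norm (A k)"])
       (use ineqs in \<open>auto intro!: tendsto_intros Wl Al\<close>)
  ultimately show ?thesis by simp
qed



lemma norm_add_sq: "(norm (a + b))\<^sup>2 = (norm a)\<^sup>2 + 2 * (a \<bullet> b) + (norm b)\<^sup>2" for a b :: "'a::real_inner"
  by (simp add: power2_norm_eq_inner inner_add_left inner_add_right inner_commute)

lemma strong_mono_from_pos:
  fixes g :: "'a::euclidean_space \<Rightarrow> 'a"
  assumes cont: "continuous_on UNIV g"
    and R: "R > 0" and L: "L \<ge> 0"
    and lipR: "\<forall>y\<in>cball x R. \<forall>z\<in>cball x R. norm (g y - g z) \<le> L * norm (y - z)"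
    and pos: "\<forall>y\<in>ball x R. \<forall>w a. (w, -a) \<in> reg_normal (gph (\<lambda>y. {g y})) (y, g y) \<longrightarrow> \<kappa> * (norm a)\<^sup>2 \<le> w \<bullet> a"
    and r1: "r1 < R" and y: "y \<in> ball x r1" and z: "z \<in> ball x r1"
  shows "\<kappa> * (norm (y - z))\<^sup>2 \<le> (g y - g z) \<bullet> (y - z)"
proof (cases "y = z")
  case True then show ?thesis by simp
next
  case False
  define e where "e = y - z"
  have en: "e \<noteq> 0" using False by (simp add: e_def)
  have ne: "norm e > 0" using en by simp
  define f where "f u = e \<bullet> g u" for u
  define m where "m = \<kappa> * (norm e)\<^sup>2"
  have goal_eq: "(g y - g z) \<bullet> (y - z) = f y - f z" by (simp add: f_def e_def inner_commute inner_diff_right)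
  have main: "m \<le> (f y - f z) + 2 * \<epsilon>" if ep: "\<epsilon> > 0" for \<epsilon>
  proof (rule ccontr)
    assume "\<not> ?thesis"
    then have fy: "f y - f z < m - 2 * \<epsilon>" by simp
    define c where "c = (m - \<epsilon>) / (norm e)\<^sup>2"
    have ce: "c * (norm e)\<^sup>2 = m - \<epsilon>" using ne by (simp add: c_def)
    define G where "G u = f u - c * (e \<bullet> u)" for u
    have Gyz: "G y < G z - \<epsilon>"
    proof -
      have "G y - G z = f y - f z - c * (e \<bullet> e)" by (simp add: G_def e_def inner_diff_right algebra_simps)
      also have "\<dots> = f y - f z - (m - \<epsilon>)" using ce by (simp add: power2_norm_eq_inner)
      finally show ?thesis using fy by simp
    qed
    define LG where "LG = norm e * L + \<bar>c\<bar> * norm e"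
    have LG0: "LG \<ge> 0" using L by (simp add: LG_def)
    have Glip: "\<bar>G u - G v\<bar> \<le> LG * norm (u - v)" if "u \<in> cball x R" "v \<in> cball x R" for u v
    proof -
      have "G u - G v = e \<bullet> (g u - g v) - c * (e \<bullet> (u - v))" by (simp add: G_def f_def inner_diff_right algebra_simps)
      then have "\<bar>G u - G v\<bar> \<le> \<bar>e \<bullet> (g u - g v)\<bar> + \<bar>c\<bar> * \<bar>e \<bullet> (u - v)\<bar>"
        using abs_triangle_ineq4[of "e \<bullet> (g u - g v)" "c * (e \<bullet> (u - v))"] by (simp add: abs_mult)
      also have "\<dots> \<le> norm e * norm (g u - g v) + \<bar>c\<bar> * (norm e * norm (u - v))"
        by (intro add_mono mult_left_mono Cauchy_Schwarz_ineq2) auto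
      also have "\<dots> \<le> norm e * (L * norm (u - v)) + \<bar>c\<bar> * (norm e * norm (u - v))"
        using lipR that by (intro add_mono mult_left_mono) auto
      also have "\<dots> = LG * norm (u - v)" by (simp add: LG_def algebra_simps)
      finally show ?thesis .
    qed
    define K where "K = LG\<^sup>2 / (4 * \<epsilon>) + LG * (2 * R + norm e) / (R - r1)\<^sup>2 + 1"
    have K1: "K \<ge> LG\<^sup>2 / (4 * \<epsilon>)" "K > LG * (2 * R + norm e) / (R - r1)\<^sup>2" "K > 0"
    proof -
      have A1: "LG\<^sup>2 / (4 * \<epsilon>) \<ge> 0" using ep by simp
      have A2: "LG * (2 * R + norm e) / (R - r1)\<^sup>2 \<ge> 0" using LG0 R
        by (intro divide_nonneg_nonneg mult_nonneg_nonneg) auto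
      show "K \<ge> LG\<^sup>2 / (4 * \<epsilon>)" "K > LG * (2 * R + norm e) / (R - r1)\<^sup>2" "K > 0"
        using A1 A2 unfolding K_def by linarith+
    qed
    define \<Phi> where "\<Phi> p = G (fst p) + K * (norm (fst p - (z + snd p *\<^sub>R e)))\<^sup>2" for p :: "'a \<times> real"
    have contG: "continuous_on UNIV G" unfolding G_def f_def
      by (intro continuous_intros cont)
    have "continuous_on (cball x R \<times> {0..1}) \<Phi>" unfolding \<Phi>_def
      by (intro continuous_intros continuous_on_compose2[OF contG]) auto
    moreover have "compact (cball x R \<times> {0..1::real})" by (intro compact_Times compact_cball compact_Icc)
    moreover have "cball x R \<times> {0..1::real} \<noteq> {}" using R by auto
    ultimately obtain p where p: "p \<in> cball x R \<times> {0..1}" "\<forall>q\<in>cball x R \<times> {0..1}. \<Phi> p \<le> \<Phi> q"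
      using continuous_attains_inf by metis
    obtain us ts where pe: "p = (us, ts)" by (cases p)
    have us: "us \<in> cball x R" and ts: "0 \<le> ts" "ts \<le> 1" using p(1) pe by auto
    define ss where "ss = z + ts *\<^sub>R e"
    have ss_eq: "ss = (1 - ts) *\<^sub>R z + ts *\<^sub>R y" by (simp add: ss_def e_def algebra_simps)
    have ssb: "ss \<in> ball x r1"
      using convex_ball[of x r1] z y ts unfolding ss_eq convex_alt by auto
    have ssc: "ss \<in> cball x R" using ssb r1 by auto
    define \<delta> where "\<delta> = norm (us - ss)"
    have Phip: "\<Phi> p = G us + K * \<delta>\<^sup>2" by (simp add: \<Phi>_def pe \<delta>_def ss_def)
    have "\<Phi> p \<le> \<Phi> (y, 1)" using p(2) y r1 by auto
    also have "\<Phi> (y, 1) = G y" by (simp add: \<Phi>_def e_def)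
    finally have PhiG: "G us + K * \<delta>\<^sup>2 \<le> G y" using Phip by simp
    have Gus: "G us \<ge> G ss - LG * \<delta>" using Glip[OF us ssc] by (simp add: \<delta>_def)
    have "norm (ss - y) = (1 - ts) * norm e"
    proof -
      have "ss - y = - ((1 - ts) *\<^sub>R e)" by (simp add: ss_def e_def algebra_simps)
      then show ?thesis using ts by simp
    qed
    then have "norm (ss - y) \<le> norm e" using ts ne by (simp add: mult_le_cancel_right1)
    then have Gss: "G ss \<ge> G y - LG * norm e"
      using Glip[OF ssc, of y] y r1 LG0 by (smt (verit) mem_ball mem_cball less_imp_le mult_left_mono)
    have d2R: "\<delta> \<le> 2 * R"
    proof -
      have "\<delta> \<le> dist x us + dist x ss" unfolding \<delta>_def by (metis dist_norm dist_triangle dist_commute)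
      then show ?thesis using us ssc by simp
    qed
    have d0: "\<delta> \<ge> 0" by (simp add: \<delta>_def)
    have "K * \<delta>\<^sup>2 \<le> LG * \<delta> + LG * norm e" using PhiG Gus Gss by linarith
    also have "\<dots> \<le> LG * (2 * R + norm e)" using d2R LG0 by (simp add: algebra_simps mult_left_mono)
    finally have Kd: "K * \<delta>\<^sup>2 \<le> LG * (2 * R + norm e)" .
    have dlt: "\<delta> < R - r1"
    proof (rule ccontr)
      assume "\<not> ?thesis"
      then have "(R - r1)\<^sup>2 \<le> \<delta>\<^sup>2" using r1 by (simp add: power_mono)
      then have "K * (R - r1)\<^sup>2 \<le> K * \<delta>\<^sup>2" using K1 by simp
      moreover have "LG * (2 * R + norm e) < K * (R - r1)\<^sup>2" using K1(2) r1 by (simp add: divide_less_eq)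
      ultimately show False using Kd by simp
    qed
    have usb: "us \<in> ball x R"
    proof -
      have "dist x us \<le> dist x ss + \<delta>" unfolding \<delta>_def by (metis dist_norm dist_triangle dist_commute)
      then show ?thesis using ssb dlt by simp
    qed
    have tspos: "ts > 0"
    proof (rule ccontr)
      assume "\<not> ?thesis"
      then have "ts = 0" using ts by simp
      then have sz: "ss = z" by (simp add: ss_def)
      have "G us \<ge> G z - LG * \<delta>" using Gus sz by simp
      moreover have "LG * \<delta> - K * \<delta>\<^sup>2 \<le> LG\<^sup>2 / (4 * K)"
      proof -
        have "0 \<le> (2 * K * \<delta> - LG)\<^sup>2" by simp
        then have "4 * K * (LG * \<delta> - K * \<delta>\<^sup>2) \<le> LG\<^sup>2" by (simp add: power2_eq_square algebra_simps)
        then show ?thesis using K1(3) by (simp add: field_simps)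
      qed
      moreover have "LG\<^sup>2 / (4 * K) \<le> \<epsilon>"
      proof -
        have "LG\<^sup>2 \<le> K * (4 * \<epsilon>)" using K1(1) ep by (simp add: divide_le_eq)
        then show ?thesis using K1(3) by (simp add: divide_le_eq algebra_simps)
      qed
      ultimately have "G us + K * \<delta>\<^sup>2 \<ge> G z - \<epsilon>" by linarith
      then show False using PhiG Gyz by linarith
    qed
    text \<open>first order condition in t\<close>
    have pe_nonneg: "(us - ss) \<bullet> e \<ge> 0"
    proof (rule ccontr)
      assume neg: "\<not> ?thesis"
      define q where "q = (us - ss) \<bullet> e"
      have q: "q < 0" using neg by (simp add: q_def)
      define h where "h = min ts (- q / (norm e)\<^sup>2)"
      have h: "h > 0" "h \<le> ts" "h \<le> - q / (norm e)\<^sup>2" using tspos q ne divide_neg_pos[OF q, of "(norm e)\<^sup>2"] by (auto simp: h_def)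
      have "h * (norm e)\<^sup>2 \<le> (- q / (norm e)\<^sup>2) * (norm e)\<^sup>2" by (rule mult_right_mono[OF h(3)]) simp
      also have "\<dots> = - q" using ne by simp
      finally have "h * (norm e)\<^sup>2 \<le> - q" .
      have "(us, ts - h) \<in> cball x R \<times> {0..1}" using us h ts by auto
      then have "\<Phi> p \<le> \<Phi> (us, ts - h)" using p(2) by blast
      moreover have "\<Phi> (us, ts - h) = G us + K * (norm ((us - ss) + h *\<^sub>R e))\<^sup>2"
        by (simp add: \<Phi>_def ss_def algebra_simps)
      moreover have "(norm ((us - ss) + h *\<^sub>R e))\<^sup>2 = \<delta>\<^sup>2 + h * (2 * q + h * (norm e)\<^sup>2)"
        unfolding norm_add_sq by (simp add: \<delta>_def q_def power2_eq_square algebra_simps)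
      ultimately have "0 \<le> K * (h * (2 * q + h * (norm e)\<^sup>2))" using Phip by (simp add: algebra_simps)
      then have "0 \<le> 2 * q + h * (norm e)\<^sup>2" using K1(3) h(1) by (simp add: zero_le_mult_iff)
      then show False using \<open>h * (norm e)\<^sup>2 \<le> - q\<close> q by linarith
    qed
    text \<open>first order condition in u gives a regular normal\<close>
    define w where "w = c *\<^sub>R e - (2 * K) *\<^sub>R (us - ss)"
    have ineq: "w \<bullet> (u - us) - e \<bullet> (g u - g us) \<le> K * (norm (u - us))\<^sup>2" if u: "u \<in> ball us (R - dist x us)" for u
    proof -
      have "u \<in> cball x R" using u usb by (metis dist_triangle add.commute le_diff_eq less_imp_le mem_ball mem_cball order_trans)
      then have P1: "\<Phi> p \<le> \<Phi> (u, ts)" using p(2) ts by auto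
      have P2: "\<Phi> (u, ts) = G u + K * (norm ((u - us) + (us - ss)))\<^sup>2"
      proof -
        have eq: "(u - us) + (us - ss) = u - (z + ts *\<^sub>R e)" by (simp add: ss_def)
        show ?thesis by (simp only: eq \<Phi>_def fst_conv snd_conv)
      qed
      define a1 where "a1 = (norm (u - us))\<^sup>2"
      define b1 where "b1 = (u - us) \<bullet> (us - ss)"
      define E1 where "E1 = e \<bullet> (u - us)"
      define F1 where "F1 = e \<bullet> (g u - g us)"
      have P3: "(norm ((u - us) + (us - ss)))\<^sup>2 = a1 + 2 * b1 + \<delta>\<^sup>2"
        unfolding norm_add_sq a1_def b1_def \<delta>_def by simp
      have P4: "G us + K * \<delta>\<^sup>2 \<le> G u + K * (a1 + 2 * b1 + \<delta>\<^sup>2)" using P1 P2 P3 Phip by simp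
      have P5: "G u - G us = F1 - c * E1"
        unfolding F1_def E1_def G_def f_def by (simp add: inner_diff_right algebra_simps)
      have P6: "w \<bullet> (u - us) = c * E1 - 2 * K * b1"
      proof -
        have "w \<bullet> (u - us) = c * (e \<bullet> (u - us)) - (2 * K) * ((us - ss) \<bullet> (u - us))"
          unfolding w_def by (simp only: inner_diff_left inner_scaleR_left)
        moreover have "(us - ss) \<bullet> (u - us) = b1" unfolding b1_def by (rule inner_commute)
        ultimately show ?thesis unfolding E1_def by simp
      qed
      have "w \<bullet> (u - us) - F1 \<le> K * a1" using P4 P5 P6 by (simp add: algebra_simps)
      then show ?thesis by (simp add: a1_def F1_def)
    qed
    have "R - dist x us > 0" using usb by simp
    from reg_normal_gphI[OF this ineq]
    have rn: "(w, -e) \<in> reg_normal (gph (\<lambda>y. {g y})) (us, g us)" by blast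
    then have "\<kappa> * (norm e)\<^sup>2 \<le> w \<bullet> e" using pos usb by blast
    moreover have "w \<bullet> e = c * (norm e)\<^sup>2 - 2 * K * ((us - ss) \<bullet> e)"
      by (simp add: w_def inner_diff_left power2_norm_eq_inner)
    ultimately have "m \<le> m - \<epsilon> - 2 * K * ((us - ss) \<bullet> e)" using ce by (simp add: m_def)
    moreover have "0 \<le> 2 * K * ((us - ss) \<bullet> e)" using K1(3) pe_nonneg by simp
    ultimately show False using ep by linarith
  qed
  have "m \<le> f y - f z"
  proof (rule field_le_epsilon)
    fix \<epsilon> :: real assume "\<epsilon> > 0"
    then show "m \<le> f y - f z + \<epsilon>" using main[of "\<epsilon>/2"] by simp
  qed
  then show ?thesis using goal_eq by (simp add: m_def e_def)
qed



lemma local_structure: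
  fixes g :: "'a::euclidean_space \<Rightarrow> 'a"
  assumes cont: "continuous_on UNIV g" and lip: "loc_lipschitz g"
    and pdx: "\<forall>u z. u \<noteq> 0 \<and> z \<in> hess2 g x u \<longrightarrow> z \<bullet> u > 0"
  obtains r \<kappa> L where "r > 0" "\<kappa> > 0" "L \<ge> 0"
    "\<forall>y\<in>ball x r. \<forall>z\<in>ball x r. \<kappa> * (norm (y - z))\<^sup>2 \<le> (g y - g z) \<bullet> (y - z)"
    "\<forall>y\<in>ball x r. \<forall>w a. (w, -a) \<in> lim_normal (gph (\<lambda>y. {g y})) (y, g y) \<longrightarrow> \<kappa> * (norm a)\<^sup>2 \<le> w \<bullet> a \<and> norm w \<le> L * norm a"
    "\<forall>y\<in>ball x r. \<forall>z\<in>ball x r. norm (g y - g z) \<le> L * norm (y - z)"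
proof -
  obtain r1 \<kappa> where r1: "r1 > 0" "\<kappa> > 0"
    "\<forall>y\<in>ball x r1. \<forall>w a. (w, -a) \<in> reg_normal (gph (\<lambda>y. {g y})) (y, g y) \<longrightarrow> \<kappa> * (norm a)\<^sup>2 \<le> w \<bullet> a"
    using uniform_pos[OF cont lip pdx] by blast
  obtain r0 L where r0: "r0 > 0" "L \<ge> 0" "\<forall>y\<in>ball x r0. \<forall>z\<in>ball x r0. norm (g y - g z) \<le> L * norm (y - z)"
    using lip_ball_uniform[OF lip] by blast
  define R where "R = min r1 r0 / 2"
  have R: "R > 0" "R < r0" "R < r1" using r0 r1 by (auto simp: R_def)
  have lipR: "\<forall>y\<in>cball x R. \<forall>z\<in>cball x R. norm (g y - g z) \<le> L * norm (y - z)"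
  proof -
    have "cball x R \<subseteq> ball x r0" using R by auto
    then show ?thesis using r0(3) by blast
  qed
  have posR: "\<forall>y\<in>ball x R. \<forall>w a. (w, -a) \<in> reg_normal (gph (\<lambda>y. {g y})) (y, g y) \<longrightarrow> \<kappa> * (norm a)\<^sup>2 \<le> w \<bullet> a"
  proof -
    have "ball x R \<subseteq> ball x r1" using R by auto
    then show ?thesis using r1(3) by blast
  qed
  have A: "\<forall>y\<in>ball x (R/2). \<forall>z\<in>ball x (R/2). \<kappa> * (norm (y - z))\<^sup>2 \<le> (g y - g z) \<bullet> (y - z)"
    using strong_mono_from_pos[OF cont R(1) r0(2) lipR posR, of "R/2"] R(1) by auto
  have P: "\<forall>y'\<in>ball x (R/2). \<forall>w a. (w, -a) \<in> reg_normal (gph (\<lambda>y. {g y})) (y', g y') \<longrightarrow> \<kappa> * (norm a)\<^sup>2 \<le> w \<bullet> a \<and> norm w \<le> L * norm a"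
  proof (intro ballI allI impI conjI)
    fix y' w a assume y': "y' \<in> ball x (R/2)" and rn: "(w, -a) \<in> reg_normal (gph (\<lambda>y. {g y})) (y', g y')"
    have "ball x (R/2) \<subseteq> ball x R" using R by auto
    then show "\<kappa> * (norm a)\<^sup>2 \<le> w \<bullet> a" using posR y' rn by blast
    have "y' \<in> ball x (r0/2)" using y' R by auto
    then show "norm w \<le> L * norm a" by (rule reg_normal_bound_near[OF r0 _ rn])
  qed
  have B: "\<forall>y\<in>ball x (R/2). \<forall>w a. (w, -a) \<in> lim_normal (gph (\<lambda>y. {g y})) (y, g y) \<longrightarrow> \<kappa> * (norm a)\<^sup>2 \<le> w \<bullet> a \<and> norm w \<le> L * norm a"
    using lim_normal_gph_inherit[OF P] by blast
  have C: "\<forall>y\<in>ball x (R/2). \<forall>z\<in>ball x (R/2). norm (g y - g z) \<le> L * norm (y - z)"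
    using r0(3) R by auto
  show ?thesis using that[OF _ r1(2) r0(2) A B C] R by simp
qed

lemma exists_dir:
  fixes g :: "'a::euclidean_space \<Rightarrow> 'a"
  assumes cont: "continuous_on UNIV g" and lip: "loc_lipschitz g"
    and pdx: "\<forall>u z. u \<noteq> 0 \<and> z \<in> hess2 g x u \<longrightarrow> z \<bullet> u > 0"
  shows "\<exists>d. w \<in> hess2 g x d"
proof -
  obtain r \<kappa> L where rk: "r > 0" "\<kappa> > 0" "L \<ge> 0"
    "\<forall>y\<in>ball x r. \<forall>z\<in>ball x r. \<kappa> * (norm (y - z))\<^sup>2 \<le> (g y - g z) \<bullet> (y - z)"
    "\<forall>y\<in>ball x r. \<forall>z\<in>ball x r. norm (g y - g z) \<le> L * norm (y - z)"
    using local_structure[OF cont lip pdx] by metis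
  define \<rho> where "\<rho> = r / 2"
  have \<rho>: "\<rho> > 0" "\<rho> < r" using rk by (auto simp: \<rho>_def)
  have cb: "cball x \<rho> \<subseteq> ball x r" using \<rho> by auto
  have lowg: "\<kappa> * norm (y - x) \<le> norm (g y - g x)" if "y \<in> ball x r" for y
  proof (cases "y = x")
    case True then show ?thesis by simp
  next
    case False
    have "\<kappa> * (norm (y - x))\<^sup>2 \<le> (g y - g x) \<bullet> (y - x)" using rk(4) that rk(1) by auto
    also have "\<dots> \<le> norm (g y - g x) * norm (y - x)" by (rule Cauchy_Schwarz_ineq2[THEN abs_le_D1])
    finally have "(\<kappa> * norm (y - x)) * norm (y - x) \<le> norm (g y - g x) * norm (y - x)" by (simp add: power2_eq_square algebra_simps)
    then show ?thesis using False by simp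
  qed
  define K0 where "K0 = norm w / (\<kappa>\<^sup>2 * \<rho>) + 1"
  have K0: "K0 > 0" "K0 > norm w / (\<kappa>\<^sup>2 * \<rho>)" using rk \<rho> by (auto simp: K0_def intro!: add_nonneg_pos divide_nonneg_pos)
  define Kk where "Kk k = K0 + real k" for k
  have Kk: "Kk k \<ge> K0" "Kk k > 0" for k using K0 by (auto simp: Kk_def)
  define \<psi> where "\<psi> k y = - (w \<bullet> y) + Kk k * (norm (g y - g x))\<^sup>2" for k y
  have "\<forall>k. \<exists>y\<in>cball x \<rho>. \<forall>u\<in>cball x \<rho>. \<psi> k y \<le> \<psi> k u"
  proof
    fix k
    have "continuous_on (cball x \<rho>) (\<psi> k)" unfolding \<psi>_def
      by (intro continuous_intros continuous_on_subset[OF cont]) auto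
    moreover have ne: "cball x \<rho> \<noteq> {}" using \<rho> by auto
    ultimately show "\<exists>y\<in>cball x \<rho>. \<forall>u\<in>cball x \<rho>. \<psi> k y \<le> \<psi> k u"
      using continuous_attains_inf[OF compact_cball ne] by blast
  qed
  then obtain Y where Y: "\<And>k. Y k \<in> cball x \<rho>" "\<And>k u. u \<in> cball x \<rho> \<Longrightarrow> \<psi> k (Y k) \<le> \<psi> k u" by metis
  have Yr: "Y k \<in> ball x r" for k using Y(1) cb by blast
  have gb: "Kk k * norm (g (Y k) - g x) \<le> norm w / \<kappa>" for k
  proof -
    have "\<psi> k (Y k) \<le> \<psi> k x" using Y \<rho> by auto
    then have "Kk k * (norm (g (Y k) - g x))\<^sup>2 \<le> w \<bullet> (Y k - x)" by (simp add: \<psi>_def inner_diff_right)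
    also have "\<dots> \<le> norm w * norm (Y k - x)" by (rule Cauchy_Schwarz_ineq2[THEN abs_le_D1])
    also have "\<dots> \<le> norm w * (norm (g (Y k) - g x) / \<kappa>)"
      using lowg[OF Yr] rk(2) by (intro mult_left_mono) (auto simp: field_simps)
    finally have fin: "Kk k * (norm (g (Y k) - g x))\<^sup>2 \<le> norm w * (norm (g (Y k) - g x) / \<kappa>)" .
    define n where "n = norm (g (Y k) - g x)"
    have fin2: "(Kk k * n) * n \<le> (norm w / \<kappa>) * n" using fin unfolding n_def by (simp add: power2_eq_square)
    show ?thesis
    proof (cases "n = 0")
      case True then show ?thesis using rk(2) by (simp add: n_def)
    next
      case False
      then have "n > 0" by (simp add: n_def)
      from mult_right_le_imp_le[OF fin2 this] show ?thesis by (simp add: n_def)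
    qed
  qed
  have yb: "norm (Y k - x) \<le> norm w / (\<kappa>\<^sup>2 * Kk k)" for k
  proof -
    have "\<kappa> * norm (Y k - x) \<le> norm (g (Y k) - g x)" by (rule lowg[OF Yr])
    also have "\<dots> \<le> norm w / (\<kappa> * Kk k)" using gb[of k] Kk[of k] rk(2) by (simp add: field_simps)
    finally show ?thesis using rk(2) Kk[of k] by (simp add: field_simps power2_eq_square)
  qed
  have Yin: "Y k \<in> ball x \<rho>" for k
  proof -
    have "norm w / (\<kappa>\<^sup>2 * Kk k) \<le> norm w / (\<kappa>\<^sup>2 * K0)"
      using Kk[of k] K0 rk(2) by (intro divide_left_mono mult_left_mono mult_pos_pos) auto
    also have "\<dots> < \<rho>" using K0 rk(2) \<rho> by (simp add: field_simps)
    finally show ?thesis using yb[of k] by (simp add: dist_norm norm_minus_commute)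
  qed
  define q where "q k = (2 * Kk k) *\<^sub>R (g (Y k) - g x)" for k
  have qb: "norm (q k) \<le> 2 * norm w / \<kappa>" for k using gb[of k] Kk[of k] by (simp add: q_def)
  have rn: "(w, - q k) \<in> reg_normal (gph (\<lambda>y. {g y})) (Y k, g (Y k))" for k
  proof -
    define dd where "dd = \<rho> - dist x (Y k)"
    have dd: "dd > 0" using Yin[of k] by (simp add: dd_def)
    have "w \<bullet> (u - Y k) - q k \<bullet> (g u - g (Y k)) \<le> (Kk k * L\<^sup>2) * (norm (u - Y k))\<^sup>2" if u: "u \<in> ball (Y k) dd" for u
    proof -
      have "dist x u \<le> dist x (Y k) + dist (Y k) u" by (rule dist_triangle)
      then have uc: "u \<in> cball x \<rho>" using u unfolding dd_def by simp
      have "\<psi> k (Y k) \<le> \<psi> k u" using Y(2)[OF uc] .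
      moreover have "(norm (g u - g x))\<^sup>2 = (norm (g u - g (Y k)))\<^sup>2 + 2 * ((g u - g (Y k)) \<bullet> (g (Y k) - g x)) + (norm (g (Y k) - g x))\<^sup>2"
        using norm_add_sq[of "g u - g (Y k)" "g (Y k) - g x"] by simp
      ultimately have "w \<bullet> (u - Y k) \<le> Kk k * ((norm (g u - g (Y k)))\<^sup>2 + 2 * ((g u - g (Y k)) \<bullet> (g (Y k) - g x)))"
        unfolding \<psi>_def by (simp add: inner_diff_right algebra_simps)
      moreover have "q k \<bullet> (g u - g (Y k)) = 2 * Kk k * ((g u - g (Y k)) \<bullet> (g (Y k) - g x))"
        by (simp add: q_def inner_commute)
      ultimately have i1: "w \<bullet> (u - Y k) - q k \<bullet> (g u - g (Y k)) \<le> Kk k * (norm (g u - g (Y k)))\<^sup>2"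
        by (simp add: algebra_simps)
      have "norm (g u - g (Y k)) \<le> L * norm (u - Y k)" using rk(5) uc cb Yr by auto
      then have "(norm (g u - g (Y k)))\<^sup>2 \<le> (L * norm (u - Y k))\<^sup>2" by (simp add: power_mono)
      then have "Kk k * (norm (g u - g (Y k)))\<^sup>2 \<le> Kk k * (L * norm (u - Y k))\<^sup>2" using Kk[of k] by simp
      then show ?thesis using i1 by (simp add: power_mult_distrib algebra_simps)
    qed
    then show ?thesis by (rule reg_normal_gphI[OF dd])
  qed
  have bnd: "\<forall>k. q k \<in> cball 0 (2 * norm w / \<kappa>)" using qb by simp
  obtain d s where ds: "strict_mono s" "(q \<circ> s) \<longlonglongrightarrow> d"
    using seq_compactE[OF compact_imp_seq_compact[OF compact_cball] bnd] by blast
  have Yl: "Y \<longlonglongrightarrow> x"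
  proof -
    have "(\<lambda>k. norm w / (\<kappa>\<^sup>2 * Kk k)) \<longlonglongrightarrow> 0"
    proof -
      have f1: "filterlim (\<lambda>k. K0 + real k) at_top sequentially"
        by (rule filterlim_tendsto_add_at_top[OF tendsto_const filterlim_real_sequentially])
      have f2: "filterlim (\<lambda>k. \<kappa>\<^sup>2 * Kk k) at_top sequentially" unfolding Kk_def
        by (rule filterlim_tendsto_pos_mult_at_top[OF tendsto_const _ f1]) (use rk(2) in simp)
      show ?thesis by (rule tendsto_divide_0[OF tendsto_const filterlim_at_top_imp_at_infinity[OF f2]])
    qed
    then have "(\<lambda>k. dist (Y k) x) \<longlonglongrightarrow> 0"
      by (rule tendsto_sandwich[rotated 2, OF tendsto_const]) (auto simp: dist_norm yb)
    then show ?thesis using tendsto_dist_iff by blast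
  qed
  have Ysl: "(\<lambda>n. Y (s n)) \<longlonglongrightarrow> x" using LIMSEQ_subseq_LIMSEQ[OF Yl ds(1)] by (simp add: o_def)
  have isc: "isCont g x" using cont by (simp add: continuous_on_eq_continuous_at)
  have gYsl: "(\<lambda>n. g (Y (s n))) \<longlonglongrightarrow> g x" by (rule isCont_tendsto_compose[OF isc Ysl])
  have "(w, -d) \<in> lim_normal (gph (\<lambda>y. {g y})) (x, g x)"
    unfolding lim_normal_def
  proof (intro CollectI exI conjI allI)
    fix k
    show "(Y (s k), g (Y (s k))) \<in> gph (\<lambda>y. {g y})" by (simp add: gph_def)
    show "(w, - q (s k)) \<in> reg_normal (gph (\<lambda>y. {g y})) (Y (s k), g (Y (s k)))" by (rule rn)
  next
    show "(\<lambda>k. (Y (s k), g (Y (s k)))) \<longlonglongrightarrow> (x, g x)" by (intro tendsto_Pair Ysl gYsl)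
    have "(\<lambda>k. q (s k)) \<longlonglongrightarrow> d" using ds(2) by (simp add: o_def)
    then show "(\<lambda>k. (w, - q (s k))) \<longlonglongrightarrow> (w, - d)" by (intro tendsto_Pair tendsto_const tendsto_minus)
  qed
  then show ?thesis by (auto simp: hess2_def coderiv_def)
qed



lemma line_deriv:
  fixes phi :: "'a::euclidean_space \<Rightarrow> real"
  assumes deriv: "\<forall>x. (phi has_derivative (\<lambda>h. g x \<bullet> h)) (at x)"
  shows "((\<lambda>t. phi (x + t *\<^sub>R d)) has_real_derivative (g (x + t *\<^sub>R d) \<bullet> d)) (at t)"
proof -
  have l: "((\<lambda>t. x + t *\<^sub>R d) has_derivative (\<lambda>s. s *\<^sub>R d)) (at t)"
    by (auto intro!: derivative_eq_intros)
  have "((\<lambda>t. phi (x + t *\<^sub>R d)) has_derivative (\<lambda>s. g (x + t *\<^sub>R d) \<bullet> (s *\<^sub>R d))) (at t)"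
    using has_derivative_compose[OF l] deriv by blast
  then show ?thesis by (rule has_derivative_imp_has_field_derivative) simp
qed

lemma armijo_exists:
  fixes phi :: "'a::euclidean_space \<Rightarrow> real"
  assumes deriv: "\<forall>x. (phi has_derivative (\<lambda>h. g x \<bullet> h)) (at x)"
    and sigma: "\<sigma> < 1" and beta: "0 < \<beta>" "\<beta> < 1"
    and neg: "g x \<bullet> d < 0"
  shows "\<exists>j. armijo phi g \<sigma> \<beta> x d j"
proof -
  define F where "F t = phi (x + t *\<^sub>R d)" for t
  define D where "D = g x \<bullet> d"
  have "(F has_real_derivative D) (at 0)" unfolding F_def D_def using line_deriv[OF deriv, of x d 0] by simp
  then have Q: "((\<lambda>h. (F (0 + h) - F 0) / h) \<longlongrightarrow> D) (at 0)" by (simp add: DERIV_def)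
  have bl: "filterlim (\<lambda>j. \<beta> ^ j) (at 0) sequentially"
  proof (rule filterlim_atI)
    show "((\<lambda>j. \<beta> ^ j) \<longlongrightarrow> 0) sequentially" using beta by (intro LIMSEQ_power_zero) auto
    show "\<forall>\<^sub>F j in sequentially. \<beta> ^ j \<noteq> 0" using beta by simp
  qed
  have "((\<lambda>j. (F (0 + \<beta> ^ j) - F 0) / \<beta> ^ j) \<longlongrightarrow> D) sequentially"
    using filterlim_compose[OF Q bl] by simp
  moreover have "D < \<sigma> * D" using neg sigma unfolding D_def
    by (metis mult.commute mult_less_cancel_left_neg mult.right_neutral)
  ultimately have "\<forall>\<^sub>F j in sequentially. (F (0 + \<beta> ^ j) - F 0) / \<beta> ^ j < \<sigma> * D"
    by (rule order_tendstoD(2))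
  then obtain j where j: "(F (\<beta> ^ j) - F 0) / \<beta> ^ j < \<sigma> * D" by (auto simp: eventually_sequentially)
  have bp: "\<beta> ^ j > 0" using beta by simp
  then have "F (\<beta> ^ j) - F 0 < \<sigma> * D * \<beta> ^ j" using j by (simp add: divide_less_eq)
  then have "armijo phi g \<sigma> \<beta> x d j" unfolding armijo_def F_def D_def by (simp add: algebra_simps)
  then show ?thesis by blast
qed

lemma descent:
  fixes phi :: "'a::euclidean_space \<Rightarrow> real"
  assumes deriv: "\<forall>x. (phi has_derivative (\<lambda>h. g x \<bullet> h)) (at x)"
    and lip: "\<forall>y\<in>ball c r. \<forall>z\<in>ball c r. norm (g y - g z) \<le> L * norm (y - z)"
    and L: "L \<ge> 0"
    and x: "x \<in> ball c r" and xd: "x + d \<in> ball c r"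
  shows "phi (x + d) \<le> phi x + g x \<bullet> d + L * (norm d)\<^sup>2"
proof -
  define F where "F t = phi (x + t *\<^sub>R d)" for t
  have "\<exists>z::real. 0 < z \<and> z < 1 \<and> (F 1 - F 0 = (1 - 0) * (g (x + z *\<^sub>R d) \<bullet> d))"
    unfolding F_def by (rule MVT2) (use line_deriv[OF deriv] in auto)
  then obtain z where z: "0 < z" "z < 1" "F 1 - F 0 = g (x + z *\<^sub>R d) \<bullet> d" by auto
  have seg: "x + z *\<^sub>R d \<in> ball c r"
  proof -
    have "x + z *\<^sub>R d = (1 - z) *\<^sub>R x + z *\<^sub>R (x + d)" by (simp add: algebra_simps)
    then show ?thesis using convex_ball[of c r] x xd z unfolding convex_alt by auto
  qed
  have "(g (x + z *\<^sub>R d) - g x) \<bullet> d \<le> norm (g (x + z *\<^sub>R d) - g x) * norm d"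
    by (rule Cauchy_Schwarz_ineq2[THEN abs_le_D1])
  also have "\<dots> \<le> (L * norm (z *\<^sub>R d)) * norm d"
  proof (rule mult_right_mono)
    have "norm (g (x + z *\<^sub>R d) - g x) \<le> L * norm ((x + z *\<^sub>R d) - x)" using lip seg x by blast
    then show "norm (g (x + z *\<^sub>R d) - g x) \<le> L * norm (z *\<^sub>R d)" by simp
  qed simp
  also have "\<dots> \<le> L * (norm d)\<^sup>2"
  proof -
    have "norm (z *\<^sub>R d) \<le> norm d" using z by (simp add: mult_left_le_one_le)
    then have "(L * norm (z *\<^sub>R d)) * norm d \<le> (L * norm d) * norm d" using L by (intro mult_right_mono mult_left_mono) auto
    then show ?thesis by (simp add: power2_eq_square algebra_simps)
  qed
  finally have "g (x + z *\<^sub>R d) \<bullet> d \<le> g x \<bullet> d + L * (norm d)\<^sup>2" by (simp add: inner_diff_left)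
  then show ?thesis using z(3) unfolding F_def by simp
qed

lemma least_armijo_bound:
  fixes \<beta> T :: real
  assumes ex: "\<exists>j. P j" and T: "T > 0" and beta: "0 < \<beta>" "\<beta> < 1"
    and small: "\<And>j. \<beta> ^ j \<le> T \<Longrightarrow> P j"
  shows "\<beta> ^ (LEAST j. P j) \<ge> min 1 (\<beta> * T)"
proof (cases "(LEAST j. P j) = 0")
  case True then show ?thesis using min.cobounded1[of 1 "\<beta> * T"] by simp
next
  case False
  then obtain i where i: "(LEAST j. P j) = Suc i" using not0_implies_Suc by blast
  have "\<not> P i" using not_less_Least[of i P] i by simp
  then have "\<beta> ^ i > T" using small by force
  then have "\<beta> ^ Suc i \<ge> \<beta> * T" using beta by simp
  then show ?thesis using i by simp
qed



lemma strong_convex: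
  fixes phi :: "'a::euclidean_space \<Rightarrow> real"
  assumes deriv: "\<forall>x. (phi has_derivative (\<lambda>h. g x \<bullet> h)) (at x)"
    and sm: "\<forall>y\<in>ball p r. \<forall>z\<in>ball p r. \<kappa> * (norm (y - z))\<^sup>2 \<le> (g y - g z) \<bullet> (y - z)"
    and y: "y \<in> ball p r" and z: "z \<in> ball p r"
  shows "phi z + g z \<bullet> (y - z) + (\<kappa> / 2) * (norm (y - z))\<^sup>2 \<le> phi y"
proof -
  define e where "e = y - z"
  define \<theta> where "\<theta> t = phi (z + t *\<^sub>R e) - t * (g z \<bullet> e) - (\<kappa> / 2) * t\<^sup>2 * (norm e)\<^sup>2" for t
  define \<theta>' where "\<theta>' t = g (z + t *\<^sub>R e) \<bullet> e - g z \<bullet> e - \<kappa> * t * (norm e)\<^sup>2" for t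
  have der: "(\<theta> has_real_derivative \<theta>' t) (at t)" for t
    unfolding \<theta>_def \<theta>'_def
    by (rule derivative_eq_intros line_deriv[OF deriv] refl)+ (simp add: power2_eq_square algebra_simps)
  obtain t where t: "0 < t" "t < 1" "\<theta> 1 - \<theta> 0 = (1 - 0) * \<theta>' t"
    using MVT2[of 0 1 \<theta> \<theta>'] der by auto
  have seg: "z + t *\<^sub>R e \<in> ball p r"
  proof -
    have "z + t *\<^sub>R e = (1 - t) *\<^sub>R z + t *\<^sub>R y" by (simp add: e_def algebra_simps)
    then show ?thesis using convex_ball[of p r] y z t unfolding convex_alt by auto
  qed
  have "\<kappa> * (norm (t *\<^sub>R e))\<^sup>2 \<le> (g (z + t *\<^sub>R e) - g z) \<bullet> (t *\<^sub>R e)"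
    using sm seg z by (metis add_diff_cancel_left')
  then have "t * (\<kappa> * t * (norm e)\<^sup>2) \<le> t * ((g (z + t *\<^sub>R e) - g z) \<bullet> e)"
    using t by (simp add: power2_eq_square algebra_simps)
  then have "\<kappa> * t * (norm e)\<^sup>2 \<le> (g (z + t *\<^sub>R e) - g z) \<bullet> e" using t by simp
  then have "\<theta>' t \<ge> 0" unfolding \<theta>'_def by (simp add: inner_diff_left)
  then have "\<theta> 0 \<le> \<theta> 1" using t by simp
  then show ?thesis unfolding \<theta>_def e_def by simp
qed

lemma tilt_from_strong_mono:
  fixes phi :: "'a::euclidean_space \<Rightarrow> real"
  assumes deriv: "\<forall>x. (phi has_derivative (\<lambda>h. g x \<bullet> h)) (at x)"
    and r: "r > 0" and k: "\<kappa> > 0"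
    and sm: "\<forall>y\<in>ball p r. \<forall>z\<in>ball p r. \<kappa> * (norm (y - z))\<^sup>2 \<le> (g y - g z) \<bullet> (y - z)"
    and gp: "g p = 0"
  shows "tilt_stable phi p"
proof -
  define \<gamma> where "\<gamma> = r / 2"
  have \<gamma>: "\<gamma> > 0" "\<gamma> < r" using r by (auto simp: \<gamma>_def)
  have cb: "cball p \<gamma> \<subseteq> ball p r" using \<gamma> by auto
  define \<epsilon> where "\<epsilon> = \<kappa> * \<gamma> / 2"
  have \<epsilon>: "\<epsilon> > 0" using k \<gamma> by (simp add: \<epsilon>_def)
  have contphi: "continuous_on UNIV phi"
    using deriv has_derivative_continuous by (metis continuous_at_imp_continuous_on)
  have inj: "y = z" if "y \<in> ball p r" "z \<in> ball p r" "g y = g z" for y z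
  proof -
    have "\<kappa> * (norm (y - z))\<^sup>2 \<le> 0" using sm that by force
    then have "(norm (y - z))\<^sup>2 \<le> 0" using k by (simp add: mult_le_0_iff)
    then show ?thesis by simp
  qed
  have props: "M_tilt phi p \<gamma> v \<noteq> {} \<and> (\<forall>m\<in>M_tilt phi p \<gamma> v. m \<in> ball p \<gamma> \<and> g m = v)" if v: "v \<in> ball 0 \<epsilon>" for v
  proof
    have "continuous_on (cball p \<gamma>) (\<lambda>x. phi x - v \<bullet> x)"
      by (intro continuous_intros continuous_on_subset[OF contphi]) auto
    moreover have ne: "cball p \<gamma> \<noteq> {}" using \<gamma> by auto
    ultimately obtain m where "m \<in> cball p \<gamma>" "\<forall>y\<in>cball p \<gamma>. phi m - v \<bullet> m \<le> phi y - v \<bullet> y"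
      using continuous_attains_inf[OF compact_cball ne] by blast
    then show "M_tilt phi p \<gamma> v \<noteq> {}" unfolding M_tilt_def by blast
    show "\<forall>m\<in>M_tilt phi p \<gamma> v. m \<in> ball p \<gamma> \<and> g m = v"
    proof
      fix m assume "m \<in> M_tilt phi p \<gamma> v"
      then have m: "m \<in> cball p \<gamma>" "\<forall>y\<in>cball p \<gamma>. phi m - v \<bullet> m \<le> phi y - v \<bullet> y" unfolding M_tilt_def by auto
      have "phi m - v \<bullet> m \<le> phi p - v \<bullet> p" using m \<gamma> by auto
      moreover have "phi p + (\<kappa> / 2) * (norm (m - p))\<^sup>2 \<le> phi m"
        using strong_convex[OF deriv sm, of m p] m cb r gp by auto
      ultimately have "(\<kappa> / 2) * (norm (m - p))\<^sup>2 \<le> v \<bullet> (m - p)" by (simp add: inner_diff_right)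
      also have "\<dots> \<le> norm v * norm (m - p)" by (rule Cauchy_Schwarz_ineq2[THEN abs_le_D1])
      finally have i: "(\<kappa> / 2 * norm (m - p)) * norm (m - p) \<le> norm v * norm (m - p)" by (simp add: power2_eq_square algebra_simps)
      have "norm (m - p) < \<gamma>"
      proof (cases "norm (m - p) = 0")
        case True then show ?thesis using \<gamma> by simp
      next
        case False
        then have "\<kappa> / 2 * norm (m - p) \<le> norm v" using mult_right_le_imp_le[OF i] by simp
        moreover have "norm v < \<epsilon>" using v by simp
        ultimately have "\<kappa> / 2 * norm (m - p) < \<kappa> / 2 * \<gamma>" unfolding \<epsilon>_def by simp
        then show ?thesis using k by simp
      qed
      then have mb: "m \<in> ball p \<gamma>" by (simp add: dist_norm norm_minus_commute)
      have "((\<lambda>x. phi x - v \<bullet> x) has_derivative (\<lambda>h. g m \<bullet> h - v \<bullet> h)) (at m)"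
        using deriv by (auto intro!: derivative_eq_intros)
      moreover have "eventually (\<lambda>y. phi m - v \<bullet> m \<le> phi y - v \<bullet> y) (at m)"
      proof -
        have "eventually (\<lambda>y. y \<in> ball p \<gamma>) (at m)" using mb by (intro eventually_at_in_open') auto
        then show ?thesis by eventually_elim (use m(2) in auto)
      qed
      ultimately have "(\<lambda>h. g m \<bullet> h - v \<bullet> h) = (\<lambda>h. 0)" by (rule has_derivative_local_min)
      then have "g m \<bullet> (g m - v) - v \<bullet> (g m - v) = 0" by meson
      then have "(g m - v) \<bullet> (g m - v) = 0" by (simp add: inner_diff_left)
      then show "m \<in> ball p \<gamma> \<and> g m = v" using mb by simp
    qed
  qed
  define mm where "mm v = (SOME m. m \<in> M_tilt phi p \<gamma> v)" for v
  have Mv: "M_tilt phi p \<gamma> v = {mm v}" and mmv: "mm v \<in> ball p \<gamma>" "g (mm v) = v" if v: "v \<in> ball 0 \<epsilon>" for v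
  proof -
    have mem: "mm v \<in> M_tilt phi p \<gamma> v" unfolding mm_def using props[OF v] by (simp add: some_in_eq)
    show "mm v \<in> ball p \<gamma>" "g (mm v) = v" using props[OF v] mem by auto
    show "M_tilt phi p \<gamma> v = {mm v}"
    proof (intro equalityI subsetI)
      fix m assume m: "m \<in> M_tilt phi p \<gamma> v"
      have bb: "ball p \<gamma> \<subseteq> ball p r" using \<gamma> by auto
      have "m \<in> ball p \<gamma> \<and> g m = v" "mm v \<in> ball p \<gamma> \<and> g (mm v) = v" using props[OF v] m mem by blast+
      then have "m \<in> ball p r" "mm v \<in> ball p r" "g m = g (mm v)" using bb by auto
      then show "m \<in> {mm v}" using inj by blast
    qed (use mem in auto)
  qed
  show ?thesis unfolding tilt_stable_def
  proof (intro exI conjI ballI)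
    show "\<gamma> > 0" by (fact \<gamma>(1))
    show "\<epsilon> > 0" by (fact \<epsilon>)
    show "\<And>v. v \<in> ball 0 \<epsilon> \<Longrightarrow> M_tilt phi p \<gamma> v = {mm v}" by (rule Mv)
    fix v w :: 'a assume v: "v \<in> ball 0 \<epsilon>" and w: "w \<in> ball 0 \<epsilon>"
    have "\<kappa> * (norm (mm v - mm w))\<^sup>2 \<le> (g (mm v) - g (mm w)) \<bullet> (mm v - mm w)"
    proof -
      have bb: "ball p \<gamma> \<subseteq> ball p r" using \<gamma> by auto
      have "mm v \<in> ball p r" "mm w \<in> ball p r" using mmv[OF v] mmv[OF w] bb by auto
      then show ?thesis using sm by blast
    qed
    also have "\<dots> = (v - w) \<bullet> (mm v - mm w)" using mmv[OF v] mmv[OF w] by simp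
    also have "\<dots> \<le> norm (v - w) * norm (mm v - mm w)" by (rule Cauchy_Schwarz_ineq2[THEN abs_le_D1])
    finally have i: "(\<kappa> * norm (mm v - mm w)) * norm (mm v - mm w) \<le> norm (v - w) * norm (mm v - mm w)"
      by (simp add: power2_eq_square algebra_simps)
    show "norm (mm v - mm w) \<le> (1 / \<kappa>) * norm (v - w)"
    proof (cases "norm (mm v - mm w) = 0")
      case True then show ?thesis using k by simp
    next
      case False
      then have "\<kappa> * norm (mm v - mm w) \<le> norm (v - w)" using mult_right_le_imp_le[OF i] by simp
      then show ?thesis using k by (simp add: field_simps)
    qed
  next
    have z: "0 \<in> ball (0::'a) \<epsilon>" using \<epsilon> by simp
    have "mm 0 = p" using inj mmv[OF z] cb gp \<gamma> by auto
    then show "M_tilt phi p \<gamma> 0 = {p}" using Mv[OF z] by simp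
  qed
qed



lemma uniform_decrease:
  fixes phi :: "'a::euclidean_space \<Rightarrow> real"
  assumes deriv: "\<forall>x. (phi has_derivative (\<lambda>h. g x \<bullet> h)) (at x)"
    and r: "r > 0" and k: "\<kappa> > 0" and L: "L \<ge> 0"
    and B: "\<forall>y\<in>ball p r. \<forall>w a. (w, -a) \<in> lim_normal (gph (\<lambda>y. {g y})) (y, g y) \<longrightarrow> \<kappa> * (norm a)\<^sup>2 \<le> w \<bullet> a \<and> norm w \<le> L * norm a"
    and C: "\<forall>y\<in>ball p r. \<forall>z\<in>ball p r. norm (g y - g z) \<le> L * norm (y - z)"
    and sigma: "0 < \<sigma>" "\<sigma> < 1" and beta: "0 < \<beta>" "\<beta> < 1"
    and c: "c > 0"
  shows "\<exists>\<delta>0>0. \<forall>y y'. y \<in> ball p (r/2) \<and> norm (g y) \<ge> c \<and> gdn_step phi g \<sigma> \<beta> y y' \<longrightarrow> phi y' \<le> phi y - \<delta>0"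
proof -
  define Dm where "Dm = (norm (g p) + L * r) / \<kappa>"
  have Dm0: "Dm \<ge> 0" using L r k by (simp add: Dm_def)
  define T where "T = min ((r/2) / (Dm + 1)) ((1 - \<sigma>) * \<kappa> / (L + 1))"
  have T0: "T > 0" using r Dm0 sigma k L by (simp add: T_def)
  define tm where "tm = min 1 (\<beta> * T)"
  have tm0: "tm > 0" using T0 beta by (simp add: tm_def)
  define \<delta>0 where "\<delta>0 = \<sigma> * tm * \<kappa> * c\<^sup>2 / (L + 1)\<^sup>2"
  have d0: "\<delta>0 > 0" using sigma tm0 k c L by (simp add: \<delta>0_def)
  have "phi y' \<le> phi y - \<delta>0" if y: "y \<in> ball p (r/2)" and gy: "norm (g y) \<ge> c" and st: "gdn_step phi g \<sigma> \<beta> y y'" for y y'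
  proof -
    have yr: "y \<in> ball p r" using y r by auto
    have gy0: "g y \<noteq> 0" using gy c by auto
    then obtain d where d: "- g y \<in> hess2 g y d" and ex: "\<exists>j. armijo phi g \<sigma> \<beta> y d j"
      and y': "y' = y + (\<beta> ^ (LEAST j. armijo phi g \<sigma> \<beta> y d j)) *\<^sub>R d"
      using st unfolding gdn_step_def by auto
    have "(- g y, - d) \<in> lim_normal (gph (\<lambda>y. {g y})) (y, g y)" using d by (simp add: hess2_def coderiv_def)
    then have "\<kappa> * (norm d)\<^sup>2 \<le> (- g y) \<bullet> d \<and> norm (- g y) \<le> L * norm d" using B yr by blast
    then have bd: "\<kappa> * (norm d)\<^sup>2 \<le> - g y \<bullet> d" "norm (g y) \<le> L * norm d" by auto
    have gyd: "g y \<bullet> d \<le> - \<kappa> * (norm d)\<^sup>2" using bd(1) by simp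
    have "- g y \<bullet> d \<le> norm (g y) * norm d"
      using Cauchy_Schwarz_ineq2[of "g y" d] by (simp add: abs_le_iff)
    then have "(\<kappa> * norm d) * norm d \<le> norm (g y) * norm d" using bd(1) by (simp add: power2_eq_square)
    then have kd: "\<kappa> * norm d \<le> norm (g y)"
      by (cases "norm d = 0") (auto dest: mult_right_le_imp_le)
    have "norm (g y) \<le> norm (g p) + L * r"
    proof -
      have "norm (g y - g p) \<le> L * norm (y - p)" using C yr r by auto
      also have "\<dots> \<le> L * r" using yr L by (intro mult_left_mono) (auto simp: dist_norm norm_minus_commute)
      finally show ?thesis using norm_triangle_ineq2[of "g y" "g p"] by linarith
    qed
    then have dDm: "norm d \<le> Dm" using kd k unfolding Dm_def by (simp add: field_simps)
    have small: "armijo phi g \<sigma> \<beta> y d j" if j: "\<beta> ^ j \<le> T" for j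
    proof -
      define t where "t = \<beta> ^ j"
      have t0: "t > 0" using beta by (simp add: t_def)
      have tT: "t \<le> T" using j by (simp add: t_def)
      have "norm (t *\<^sub>R d) \<le> T * Dm" using t0 tT dDm Dm0 T0 by (simp add: mult_mono)
      also have "\<dots> < r / 2"
      proof -
        have "T \<le> (r/2) / (Dm + 1)" by (simp add: T_def)
        then have "T * (Dm + 1) \<le> r / 2" using Dm0 by (simp add: le_divide_eq algebra_simps)
        then show ?thesis using T0 by (simp add: algebra_simps)
      qed
      finally have "norm (t *\<^sub>R d) < r / 2" .
      then have yt: "y + t *\<^sub>R d \<in> ball p r"
        using y dist_triangle[of p "y + t *\<^sub>R d" y] by (simp add: dist_norm)
      have desc: "phi (y + t *\<^sub>R d) \<le> phi y + g y \<bullet> (t *\<^sub>R d) + L * (norm (t *\<^sub>R d))\<^sup>2"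
        by (rule descent[OF deriv C L yr yt])
      have "L * t \<le> (1 - \<sigma>) * \<kappa>"
      proof -
        have "T \<le> (1 - \<sigma>) * \<kappa> / (L + 1)" by (simp add: T_def)
        then have "t * (L + 1) \<le> (1 - \<sigma>) * \<kappa>" using tT L by (simp add: le_divide_eq) (smt (verit) mult_right_mono)
        then show ?thesis using t0 by (simp add: algebra_simps)
      qed
      then have "(L * t) * (t * (norm d)\<^sup>2) \<le> ((1 - \<sigma>) * \<kappa>) * (t * (norm d)\<^sup>2)"
        using t0 by (intro mult_right_mono) auto
      moreover have "(1 - \<sigma>) * t * (g y \<bullet> d) \<le> (1 - \<sigma>) * t * (- \<kappa> * (norm d)\<^sup>2)"
        using gyd sigma t0 by (intro mult_left_mono) auto
      ultimately have "t * (g y \<bullet> d) + L * t\<^sup>2 * (norm d)\<^sup>2 \<le> \<sigma> * t * (g y \<bullet> d)"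
        by (simp add: power2_eq_square algebra_simps)
      then show ?thesis using desc unfolding armijo_def t_def[symmetric]
        by (simp add: power2_eq_square algebra_simps)
    qed
    define j0 where "j0 = (LEAST j. armijo phi g \<sigma> \<beta> y d j)"
    have tj: "\<beta> ^ j0 \<ge> tm" unfolding j0_def tm_def
      by (rule least_armijo_bound[OF ex T0 beta small])
    have arm: "armijo phi g \<sigma> \<beta> y d j0" unfolding j0_def using ex by (rule LeastI_ex)
    then have "phi y' \<le> phi y + \<sigma> * \<beta> ^ j0 * (g y \<bullet> d)" using y' unfolding armijo_def j0_def by simp
    also have "\<sigma> * \<beta> ^ j0 * (g y \<bullet> d) \<le> \<sigma> * tm * (- \<kappa> * (norm d)\<^sup>2)"
    proof -
      have "g y \<bullet> d \<le> - \<kappa> * (norm d)\<^sup>2" by (rule gyd)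
      moreover have "- \<kappa> * (norm d)\<^sup>2 \<le> 0" using k by simp
      ultimately have "\<beta> ^ j0 * (g y \<bullet> d) \<le> tm * (- \<kappa> * (norm d)\<^sup>2)"
        using tj tm0 by (smt (verit) mult_left_mono mult_right_mono_neg zero_le_power beta(1) less_imp_le)
      from mult_left_mono[OF this, of \<sigma>] show ?thesis using sigma by (simp add: mult.assoc)
    qed
    also have "\<sigma> * tm * (- \<kappa> * (norm d)\<^sup>2) \<le> - \<delta>0"
    proof -
      have "c \<le> (L + 1) * norm d" using gy bd(2) L by (smt (verit) mult_right_mono norm_ge_zero)
      then have "c\<^sup>2 \<le> ((L + 1) * norm d)\<^sup>2" using c by (simp add: power_mono)
      then have "c\<^sup>2 / (L + 1)\<^sup>2 \<le> (norm d)\<^sup>2" using L by (simp add: divide_le_eq power_mult_distrib mult.commute)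
      then have "\<sigma> * tm * \<kappa> * (c\<^sup>2 / (L + 1)\<^sup>2) \<le> \<sigma> * tm * \<kappa> * (norm d)\<^sup>2"
        using sigma tm0 k by (intro mult_left_mono) auto
      then show ?thesis unfolding \<delta>0_def by simp
    qed
    finally show ?thesis by simp
  qed
  then show ?thesis using d0 by blast
qed



theorem theorem3p4:
  fixes phi :: "'a::euclidean_space \<Rightarrow> real" and g :: "'a \<Rightarrow> 'a"
    and x0 :: 'a and \<sigma> \<beta> :: real
  assumes C11: "is_C11 phi g"
    and pd: "\<forall>x\<in>{x. phi x \<le> phi x0}. \<forall>u z. u \<noteq> 0 \<and> z \<in> hess2 g x u \<longrightarrow> z \<bullet> u > 0"
    and sigma: "0 < \<sigma>" "\<sigma> < 1/2"
    and beta: "0 < \<beta>" "\<beta> < 1"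
  shows "(\<forall>x N. gdn_run phi g \<sigma> \<beta> x0 x N \<longrightarrow>
            (\<forall>k\<le>N. x k \<in> {y. phi y \<le> phi x0}) \<and>
            (g (x N) \<noteq> 0 \<longrightarrow>
               (\<exists>d. - g (x N) \<in> hess2 g (x N) d) \<and>
               (\<forall>d. - g (x N) \<in> hess2 g (x N) d \<longrightarrow> (\<exists>j. armijo phi g \<sigma> \<beta> (x N) d j))))
       \<and> (\<forall>x. (\<forall>N. gdn_run phi g \<sigma> \<beta> x0 x N) \<longrightarrow>
            (\<forall>p. (\<exists>r. strict_mono r \<and> (x \<circ> r) \<longlonglongrightarrow> p) \<longrightarrow> tilt_stable phi p))"
proof -
  have deriv: "\<forall>x. (phi has_derivative (\<lambda>h. g x \<bullet> h)) (at x)" and cont: "continuous_on UNIV g"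
    and lip: "loc_lipschitz g" using C11 unfolding is_C11_def by auto
  have sigma1: "\<sigma> < 1" using sigma by simp
  have pdx: "\<forall>u z. u \<noteq> 0 \<and> z \<in> hess2 g x u \<longrightarrow> z \<bullet> u > 0" if "phi x \<le> phi x0" for x
    using pd that by blast
  have dirneg: "g x \<bullet> d < 0" if x: "phi x \<le> phi x0" and gx: "g x \<noteq> 0" and d: "- g x \<in> hess2 g x d" for x d
  proof -
    obtain r \<kappa> L where rk: "r > 0"
      "\<forall>y\<in>ball x r. \<forall>w a. (w, -a) \<in> lim_normal (gph (\<lambda>y. {g y})) (y, g y) \<longrightarrow> \<kappa> * (norm a)\<^sup>2 \<le> w \<bullet> a \<and> norm w \<le> L * norm a"
      using local_structure[OF cont lip pdx[OF x]] by metis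
    have "(- g x, - d) \<in> lim_normal (gph (\<lambda>y. {g y})) (x, g x)" using d by (simp add: hess2_def coderiv_def)
    moreover have "x \<in> ball x r" using rk(1) by simp
    ultimately have "norm (- g x) \<le> L * norm d" using rk(2) by blast
    then have "d \<noteq> 0" using gx by auto
    then have "(- g x) \<bullet> d > 0" using pdx[OF x] d by blast
    then show ?thesis by simp
  qed
  have stepdec: "phi x' \<le> phi x" if x: "phi x \<le> phi x0" and st: "gdn_step phi g \<sigma> \<beta> x x'" for x x'
  proof (cases "g x = 0")
    case True then show ?thesis using st by (simp add: gdn_step_def)
  next
    case False
    then obtain d where d: "- g x \<in> hess2 g x d" and ex: "\<exists>j. armijo phi g \<sigma> \<beta> x d j"
      and x': "x' = x + (\<beta> ^ (LEAST j. armijo phi g \<sigma> \<beta> x d j)) *\<^sub>R d"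
      using st unfolding gdn_step_def by auto
    have arm: "armijo phi g \<sigma> \<beta> x d (LEAST j. armijo phi g \<sigma> \<beta> x d j)" using ex by (rule LeastI_ex)
    have neg: "g x \<bullet> d < 0" by (rule dirneg[OF x False d])
    have "\<sigma> * \<beta> ^ (LEAST j. armijo phi g \<sigma> \<beta> x d j) * (g x \<bullet> d) \<le> 0"
      using sigma beta neg by (simp add: mult_nonneg_nonpos)
    then show ?thesis using arm x' unfolding armijo_def by simp
  qed
  have runO: "phi (x k) \<le> phi x0" if run: "gdn_run phi g \<sigma> \<beta> x0 x N" and kN: "k \<le> N" for x N k
    using kN
  proof (induction k)
    case 0 then show ?case using run by (simp add: gdn_run_def)
  next
    case (Suc k)
    then have "phi (x k) \<le> phi x0" by simp
    moreover have "gdn_step phi g \<sigma> \<beta> (x k) (x (Suc k))" using run Suc.prems by (simp add: gdn_run_def)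
    ultimately show ?case using stepdec by fastforce
  qed
  show ?thesis
  proof (rule conjI; intro allI impI)
    fix x N assume run: "gdn_run phi g \<sigma> \<beta> x0 x N"
    have A: "\<forall>k\<le>N. x k \<in> {y. phi y \<le> phi x0}" using runO[OF run] by simp
    have xN: "phi (x N) \<le> phi x0" using runO[OF run] by simp
    have B: "\<exists>d. - g (x N) \<in> hess2 g (x N) d" by (rule exists_dir[OF cont lip pdx[OF xN]])
    have C: "\<forall>d. - g (x N) \<in> hess2 g (x N) d \<longrightarrow> (\<exists>j. armijo phi g \<sigma> \<beta> (x N) d j)" if gN: "g (x N) \<noteq> 0"
      using armijo_exists[OF deriv sigma1 beta dirneg[OF xN gN]] by blast
    show "(\<forall>k\<le>N. x k \<in> {y. phi y \<le> phi x0}) \<and>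
            (g (x N) \<noteq> 0 \<longrightarrow>
               (\<exists>d. - g (x N) \<in> hess2 g (x N) d) \<and>
               (\<forall>d. - g (x N) \<in> hess2 g (x N) d \<longrightarrow> (\<exists>j. armijo phi g \<sigma> \<beta> (x N) d j)))"
      using A B C by blast
  next
    fix x p assume allrun: "\<forall>N. gdn_run phi g \<sigma> \<beta> x0 x N"
      and "\<exists>r. strict_mono r \<and> (x \<circ> r) \<longlonglongrightarrow> p"
    then obtain s where s: "strict_mono s" "(x \<circ> s) \<longlonglongrightarrow> p" by blast
    have xs: "(\<lambda>n. x (s n)) \<longlonglongrightarrow> p" using s(2) by (simp add: o_def)
    have inO: "phi (x k) \<le> phi x0" for k using runO[of x k k] allrun by blast
    have steps: "gdn_step phi g \<sigma> \<beta> (x k) (x (Suc k))" for k using allrun[rule_format, of "Suc k"] by (simp add: gdn_run_def)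
    have dec: "decseq (\<lambda>k. phi (x k))" by (rule decseq_SucI) (use stepdec inO steps in blast)
    have iscphi: "isCont phi p" using deriv has_derivative_continuous by blast
    have limphi: "(\<lambda>n. phi (x (s n))) \<longlonglongrightarrow> phi p" by (rule isCont_tendsto_compose[OF iscphi xs])
    have pO: "phi p \<le> phi x0" by (rule LIMSEQ_le_const2[OF limphi]) (use inO in auto)
    have lower: "phi p \<le> phi (x k)" for k
    proof (rule LIMSEQ_le_const2[OF limphi], intro exI allI impI)
      fix n assume "k \<le> n"
      then have "k \<le> s n" using seq_suble[OF s(1), of n] by simp
      then show "phi (x (s n)) \<le> phi (x k)" using decseqD[OF dec] by blast
    qed
    obtain r \<kappa> L where rk: "r > 0" "\<kappa> > 0" "L \<ge> 0"
      "\<forall>y\<in>ball p r. \<forall>z\<in>ball p r. \<kappa> * (norm (y - z))\<^sup>2 \<le> (g y - g z) \<bullet> (y - z)"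
      "\<forall>y\<in>ball p r. \<forall>w a. (w, -a) \<in> lim_normal (gph (\<lambda>y. {g y})) (y, g y) \<longrightarrow> \<kappa> * (norm a)\<^sup>2 \<le> w \<bullet> a \<and> norm w \<le> L * norm a"
      "\<forall>y\<in>ball p r. \<forall>z\<in>ball p r. norm (g y - g z) \<le> L * norm (y - z)"
      using local_structure[OF cont lip pdx[OF pO]] by metis
    have gp0: "g p = 0"
    proof (rule ccontr)
      assume gp: "g p \<noteq> 0"
      define c where "c = norm (g p) / 2"
      have c: "c > 0" using gp by (simp add: c_def)
      obtain \<delta>0 where d0: "\<delta>0 > 0"
        and dec0: "\<forall>y y'. y \<in> ball p (r/2) \<and> norm (g y) \<ge> c \<and> gdn_step phi g \<sigma> \<beta> y y' \<longrightarrow> phi y' \<le> phi y - \<delta>0"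
        using uniform_decrease[OF deriv rk(1,2,3,5,6) sigma(1) sigma1 beta c] by blast
      have e1: "eventually (\<lambda>n. x (s n) \<in> ball p (r/2)) sequentially"
      proof -
        have "p \<in> ball p (r/2)" using rk(1) by simp
        from topological_tendstoD[OF xs open_ball this] show ?thesis .
      qed
      have iscg: "isCont g p" using cont by (simp add: continuous_on_eq_continuous_at)
      have "(\<lambda>n. norm (g (x (s n)))) \<longlonglongrightarrow> norm (g p)" by (intro tendsto_norm isCont_tendsto_compose[OF iscg xs])
      moreover have "c < norm (g p)" using c by (simp add: c_def)
      ultimately have e2: "eventually (\<lambda>n. c < norm (g (x (s n)))) sequentially" by (rule order_tendstoD(1))
      have "phi p < phi p + \<delta>0" using d0 by simp
      with limphi have e3: "eventually (\<lambda>n. phi (x (s n)) < phi p + \<delta>0) sequentially" by (rule order_tendstoD(2))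
      have "eventually (\<lambda>n. x (s n) \<in> ball p (r/2) \<and> c < norm (g (x (s n))) \<and> phi (x (s n)) < phi p + \<delta>0) sequentially"
        using e1 e2 e3 by eventually_elim auto
      then obtain n where n: "x (s n) \<in> ball p (r/2)" "c < norm (g (x (s n)))" "phi (x (s n)) < phi p + \<delta>0"
        by (auto simp: eventually_sequentially)
      have "phi (x (Suc (s n))) \<le> phi (x (s n)) - \<delta>0" using dec0 n steps less_imp_le by blast
      then have "phi (x (Suc (s n))) < phi p" using n(3) by simp
      then show False using lower[of "Suc (s n)"] by simp
    qed
    show "tilt_stable phi p" by (rule tilt_from_strong_mono[OF deriv rk(1,2,4) gp0])
  qed
qed

end
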